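(* Let $G'$ be a context-free grammar with start symbol $s$, no $\varepsilon$-rules and no useless nonterminal. Then there exists a prefix $\ell$ of $G'$ such that the explanation graph $\mathrm{Expl}(G_\ell)$ (defined in the context) is cyclic if and only if the left-corner relation of $G'$ is cyclic.
   Context: Grammar: $G'$ has finite terminal set $\Sigma$, finite nonterminal set $N$, start symbol $s\in N$; every rule $A\to\alpha$ has $\alpha\in(N\cup\Sigma)^+$; a rule is useless if it occurs in no derivation of a terminal string from $s$, and a nonterminal is useless if all its rules are useless. Nonterminals $X,Y$ are in the direct left-corner relation if there is a rule $X\to Y\beta$; the left-corner relation $\to_L$ is its transitive closure; it is cyclic if $X\to_L X$ for some nonterminal $X$. A prefix is a nonempty string $\ell\in\Sigma^+$ that is an initial segment of some terminal string derivable from $s$. Explanation graph. For a prefix $\ell$ consider ground atoms $q(\ell)$, $p(\beta,u,v)$ with $\beta\in(N\cup\Sigma)^*$, $u,v\in\Sigma^*$, and switch atoms $m(A\to\alpha)$ for rules of $G'$. Consider all ground clauses: (C0) $q(\ell)\leftarrow p(s,\ell,\varepsilon)$; (C1) $p(\varepsilon,u,u)\leftarrow$ (empty body), for all $u$; (C2) for $a\in\Sigma$: $p(a\beta,a,\varepsilon)\leftarrow$ (empty body); and $p(a\beta,av,w)\leftarrow p(\beta,v,w)$ whenever $v\neq\varepsilon$; (C3) for $A\in N$ and each rule $A\to\alpha$: $p(A\beta,u,\varepsilon)\leftarrow m(A\to\alpha)\wedge p(\alpha,u,\varepsilon)$; and $p(A\beta,u,w)\leftarrow m(A\to\alpha)\wedge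 p(\alpha,u,v)\wedge p(\beta,v,w)$ whenever $v\neq\varepsilon$. A $p$- or $q$-atom is provable if it lies in the least Herbrand model of these clauses with all $m$-atoms taken as true. (These clauses describe a top-down prefix parser which succeeds as soon as the input is consumed.) The defined goals of $\mathrm{Expl}(G_\ell)$ form the smallest set containing $q(\ell)$ and such that whenever $H$ is a defined goal and $H\leftarrow\alpha$ is one of the clauses above whose $p$-atoms are all provable, every $p$-atom of $\alpha$ is a defined goal. The defining formula of a defined goal $H$ is $H\Leftrightarrow\alpha_1\vee\dots\vee\alpha_M$, where $\alpha_1,\dots,\alpha_M$ are the bodies of all such clauses with head $H$ whose $p$-atoms are all provable. $H$ is a parent of $C$ if the defined goal $C$ occurs in some $\alpha_i$; the ancestor relation is the transitive closure of the parent relation; $\mathrm{Expl}(G_\ell)$ is cyclic if some defined goal is its own ancestor. *)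

theory Defs
  imports Main
begin

datatype ('n,'t) sym = NT 'n | Tm 't

definition syms :: "'n set \<Rightarrow> 't set \<Rightarrow> ('n,'t) sym set" where
  "syms N \<Sigma> = NT ` N \<union> Tm ` \<Sigma>"

definition cfg :: "'n set \<Rightarrow> 't set \<Rightarrow> ('n \<times> ('n,'t) sym list) set \<Rightarrow> 'n \<Rightarrow> bool" where
  "cfg N \<Sigma> R s \<longleftrightarrow> finite N \<and> finite \<Sigma> \<and> finite R \<and> s \<in> N \<and>
     (\<forall>(A,\<alpha>) \<in> R. A \<in> N \<and> \<alpha> \<noteq> [] \<and> set \<alpha> \<subseteq> syms N \<Sigma>)"

definition dstep :: "('n \<times> ('n,'t) sym list) set \<Rightarrow> ('n,'t) sym list \<Rightarrow> ('n,'t) sym list \<Rightarrow> bool" where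
  "dstep R x y \<longleftrightarrow> (\<exists>\<gamma> \<delta> A \<alpha>. (A,\<alpha>) \<in> R \<and> x = \<gamma> @ [NT A] @ \<delta> \<and> y = \<gamma> @ \<alpha> @ \<delta>)"

definition useless_rule :: "'t set \<Rightarrow> ('n \<times> ('n,'t) sym list) set \<Rightarrow> 'n \<Rightarrow> 'n \<times> ('n,'t) sym list \<Rightarrow> bool" where
  "useless_rule \<Sigma> R s r \<longleftrightarrow> \<not> (\<exists>\<gamma> \<delta> w. set w \<subseteq> \<Sigma> \<and>
       (dstep R)\<^sup>*\<^sup>* [NT s] (\<gamma> @ [NT (fst r)] @ \<delta>) \<and>
       (dstep R)\<^sup>*\<^sup>* (\<gamma> @ snd r @ \<delta>) (map Tm w))"

definition useless_nt :: "'t set \<Rightarrow> ('n \<times> ('n,'t) sym list) set \<Rightarrow> 'n \<Rightarrow> 'n \<Rightarrow> bool" where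
  "useless_nt \<Sigma> R s A \<longleftrightarrow> (\<forall>\<alpha>. (A,\<alpha>) \<in> R \<longrightarrow> useless_rule \<Sigma> R s (A,\<alpha>))"

definition is_prefix :: "'t set \<Rightarrow> ('n \<times> ('n,'t) sym list) set \<Rightarrow> 'n \<Rightarrow> 't list \<Rightarrow> bool" where
  "is_prefix \<Sigma> R s l \<longleftrightarrow> l \<noteq> [] \<and>
     (\<exists>w v. set w \<subseteq> \<Sigma> \<and> (dstep R)\<^sup>*\<^sup>* [NT s] (map Tm w) \<and> w = l @ v)"

definition lc_direct :: "('n \<times> ('n,'t) sym list) set \<Rightarrow> 'n \<Rightarrow> 'n \<Rightarrow> bool" where
  "lc_direct R X Y \<longleftrightarrow> (\<exists>\<beta>. (X, NT Y # \<beta>) \<in> R)"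

definition lc_cyclic :: "('n \<times> ('n,'t) sym list) set \<Rightarrow> bool" where
  "lc_cyclic R \<longleftrightarrow> (\<exists>X. (lc_direct R)\<^sup>+\<^sup>+ X X)"

datatype ('n,'t) atom =
    Qa "'t list"
  | Pa "('n,'t) sym list" "'t list" "'t list"
  | Ma "'n \<times> ('n,'t) sym list"

inductive clause :: "'n set \<Rightarrow> 't set \<Rightarrow> ('n \<times> ('n,'t) sym list) set \<Rightarrow> 'n \<Rightarrow> 't list
    \<Rightarrow> ('n,'t) atom \<Rightarrow> ('n,'t) atom list \<Rightarrow> bool"
  for N \<Sigma> R s l where
  C0: "clause N \<Sigma> R s l (Qa l) [Pa [NT s] l []]"
| C1: "set u \<subseteq> \<Sigma> \<Longrightarrow> clause N \<Sigma> R s l (Pa [] u u) []"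
| C2a: "a \<in> \<Sigma> \<Longrightarrow> set \<beta> \<subseteq> syms N \<Sigma> \<Longrightarrow>
        clause N \<Sigma> R s l (Pa (Tm a # \<beta>) [a] []) []"
| C2b: "a \<in> \<Sigma> \<Longrightarrow> set \<beta> \<subseteq> syms N \<Sigma> \<Longrightarrow> set v \<subseteq> \<Sigma> \<Longrightarrow> set w \<subseteq> \<Sigma> \<Longrightarrow> v \<noteq> [] \<Longrightarrow>
        clause N \<Sigma> R s l (Pa (Tm a # \<beta>) (a # v) w) [Pa \<beta> v w]"
| C3a: "A \<in> N \<Longrightarrow> (A,\<alpha>) \<in> R \<Longrightarrow> set \<beta> \<subseteq> syms N \<Sigma> \<Longrightarrow> set u \<subseteq> \<Sigma> \<Longrightarrow>
        clause N \<Sigma> R s l (Pa (NT A # \<beta>) u []) [Ma (A,\<alpha>), Pa \<alpha> u []]"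
| C3b: "A \<in> N \<Longrightarrow> (A,\<alpha>) \<in> R \<Longrightarrow> set \<beta> \<subseteq> syms N \<Sigma> \<Longrightarrow>
        set u \<subseteq> \<Sigma> \<Longrightarrow> set v \<subseteq> \<Sigma> \<Longrightarrow> set w \<subseteq> \<Sigma> \<Longrightarrow> v \<noteq> [] \<Longrightarrow>
        clause N \<Sigma> R s l (Pa (NT A # \<beta>) u w) [Ma (A,\<alpha>), Pa \<alpha> u v, Pa \<beta> v w]"

fun is_Ma :: "('n,'t) atom \<Rightarrow> bool" where
  "is_Ma (Ma _) = True" | "is_Ma _ = False"

fun is_Pa :: "('n,'t) atom \<Rightarrow> bool" where
  "is_Pa (Pa _ _ _) = True" | "is_Pa _ = False"

text \<open>Least Herbrand model with all m-atoms taken as true.\<close>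
inductive provable for N \<Sigma> R s l where
  "clause N \<Sigma> R s l H B \<Longrightarrow> (\<forall>b \<in> set B. is_Ma b \<or> provable N \<Sigma> R s l b)
   \<Longrightarrow> provable N \<Sigma> R s l H"

definition usable_clause where
  "usable_clause N \<Sigma> R s l H B \<longleftrightarrow> clause N \<Sigma> R s l H B \<and>
     (\<forall>b \<in> set B. is_Pa b \<longrightarrow> provable N \<Sigma> R s l b)"

inductive defined_goal for N \<Sigma> R s l where
  root: "defined_goal N \<Sigma> R s l (Qa l)"
| step: "defined_goal N \<Sigma> R s l H \<Longrightarrow> usable_clause N \<Sigma> R s l H B \<Longrightarrow>
         C \<in> set B \<Longrightarrow> is_Pa C \<Longrightarrow> defined_goal N \<Sigma> R s l C"

definition expl_parent where
  "expl_parent N \<Sigma> R s l H C \<longleftrightarrow> defined_goal N \<Sigma> R s l H \<and> defined_goal N \<Sigma> R s l C \<and>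
     (\<exists>B. usable_clause N \<Sigma> R s l H B \<and> C \<in> set B)"

definition expl_cyclic where
  "expl_cyclic N \<Sigma> R s l \<longleftrightarrow> (\<exists>C. (expl_parent N \<Sigma> R s l)\<^sup>+\<^sup>+ C C)"

end

theory Submission
  imports Defs
begin

inductive D :: "('n \<times> ('n,'t) sym list) set \<Rightarrow> ('n,'t) sym list \<Rightarrow> 't list \<Rightarrow> bool" for R where
  D_nil: "D R [] []"
| D_tm: "D R \<beta> w \<Longrightarrow> D R (Tm a # \<beta>) (a # w)"
| D_nt: "(A,\<alpha>) \<in> R \<Longrightarrow> D R \<alpha> x \<Longrightarrow> D R \<beta> y \<Longrightarrow> D R (NT A # \<beta>) (x @ y)"

lemma D_Nil_iff: "D R [] w \<longleftrightarrow> w = []"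
  by (auto elim: D.cases intro: D_nil)
lemma D_Tm_iff: "D R (Tm a # \<beta>) w \<longleftrightarrow> (\<exists>w'. w = a # w' \<and> D R \<beta> w')"
  by (auto elim: D.cases intro: D_tm)
lemma D_NT_iff: "D R (NT A # \<beta>) w \<longleftrightarrow> (\<exists>\<alpha> x y. (A,\<alpha>) \<in> R \<and> D R \<alpha> x \<and> D R \<beta> y \<and> w = x @ y)"
proof
  assume "D R (NT A # \<beta>) w" then show "\<exists>\<alpha> x y. (A,\<alpha>) \<in> R \<and> D R \<alpha> x \<and> D R \<beta> y \<and> w = x @ y"
    by (cases rule: D.cases) auto
qed (auto intro: D_nt)

lemma D_append: "D R (p @ q) w \<longleftrightarrow> (\<exists>w1 w2. w = w1 @ w2 \<and> D R p w1 \<and> D R q w2)"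
proof (induction p arbitrary: w)
  case Nil then show ?case by (simp add: D_Nil_iff)
next
  case (Cons X p)
  show ?case
  proof (cases X)
    case (NT A)
    show ?thesis
    proof
      assume "D R ((X # p) @ q) w"
      then obtain \<alpha> x y where "(A,\<alpha>) \<in> R" "D R \<alpha> x" "D R (p @ q) y" "w = x @ y"
        unfolding NT by (auto simp: D_NT_iff)
      moreover from this(3) obtain y1 y2 where "y = y1 @ y2" "D R p y1" "D R q y2"
        using Cons.IH by blast
      ultimately show "\<exists>w1 w2. w = w1 @ w2 \<and> D R (X # p) w1 \<and> D R q w2"
        unfolding NT by (intro exI[of _ "x @ y1"] exI[of _ y2]) (auto intro: D_nt)
    next
      assume "\<exists>w1 w2. w = w1 @ w2 \<and> D R (X # p) w1 \<and> D R q w2"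
      then obtain w1 w2 where h: "w = w1 @ w2" "D R (NT A # p) w1" "D R q w2" unfolding NT by blast
      then obtain \<alpha> x y where "(A,\<alpha>) \<in> R" "D R \<alpha> x" "D R p y" "w1 = x @ y"
        by (auto simp: D_NT_iff)
      moreover have "D R (p @ q) (y @ w2)" using Cons.IH h(3) \<open>D R p y\<close> by blast
      ultimately show "D R ((X # p) @ q) w" unfolding NT h(1)
        using D_nt[of A \<alpha> R x "p @ q" "y @ w2"] by simp
    qed
  next
    case (Tm a)
    show ?thesis
    proof
      assume "D R ((X # p) @ q) w"
      then obtain w' where "w = a # w'" "D R (p @ q) w'" unfolding Tm by (auto simp: D_Tm_iff)
      moreover from this(2) obtain y1 y2 where "w' = y1 @ y2" "D R p y1" "D R q y2"
        using Cons.IH by blast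
      ultimately show "\<exists>w1 w2. w = w1 @ w2 \<and> D R (X # p) w1 \<and> D R q w2"
        unfolding Tm by (intro exI[of _ "a # y1"] exI[of _ y2]) (auto intro: D_tm)
    next
      assume "\<exists>w1 w2. w = w1 @ w2 \<and> D R (X # p) w1 \<and> D R q w2"
      then obtain w1 w2 where h: "w = w1 @ w2" "D R (Tm a # p) w1" "D R q w2" unfolding Tm by blast
      then obtain y where "D R p y" "w1 = a # y" by (auto simp: D_Tm_iff)
      moreover have "D R (p @ q) (y @ w2)" using Cons.IH h(3) \<open>D R p y\<close> by blast
      ultimately show "D R ((X # p) @ q) w" unfolding Tm h(1) by (auto intro: D_tm)
    qed
  qed
qed

lemma D_map: "D R (map Tm w) w"
  by (induction w) (auto intro: D.intros)

lemma dstep_D: "dstep R x y \<Longrightarrow> D R y w \<Longrightarrow> D R x w"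
  unfolding dstep_def
  by (auto simp: D_append D_NT_iff) (metis append.assoc)

lemma dsteps_D: "(dstep R)\<^sup>*\<^sup>* x y \<Longrightarrow> D R y w \<Longrightarrow> D R x w"
  by (induction rule: converse_rtranclp_induct) (auto intro: dstep_D)

inductive LR :: "('n \<times> ('n,'t) sym list) set \<Rightarrow> ('n,'t) sym list \<Rightarrow> 't list \<Rightarrow> 'n \<Rightarrow> ('n,'t) sym list \<Rightarrow> bool" for R where
  LR_here: "LR R (NT A # \<delta>) [] A \<delta>"
| LR_tm: "LR R \<beta> x A \<delta> \<Longrightarrow> LR R (Tm a # \<beta>) (a # x) A \<delta>"
| LR_down: "(B,\<alpha>) \<in> R \<Longrightarrow> LR R \<alpha> x A \<delta> \<Longrightarrow> LR R (NT B # \<beta>) x A (\<delta> @ \<beta>)"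
| LR_right: "(B,\<alpha>) \<in> R \<Longrightarrow> D R \<alpha> x1 \<Longrightarrow> LR R \<beta> x2 A \<delta> \<Longrightarrow> LR R (NT B # \<beta>) (x1 @ x2) A \<delta>"

lemma LR_append: "LR R (p @ q) x A \<delta> \<Longrightarrow>
   (\<exists>\<delta>1. LR R p x A \<delta>1 \<and> \<delta> = \<delta>1 @ q) \<or> (\<exists>x1 x2. x = x1 @ x2 \<and> D R p x1 \<and> LR R q x2 A \<delta>)"
proof (induction p arbitrary: x \<delta>)
  case Nil then show ?case by (intro disjI2 exI[of _ "[]"] exI[of _ x]) (auto intro: D_nil)
next
  case (Cons X p)
  show ?case
  proof (cases X)
    case (Tm a)
    from Cons.prems obtain x' where x: "x = a # x'" and l: "LR R (p @ q) x' A \<delta>"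
      unfolding Tm by (auto elim: LR.cases)
    from Cons.IH[OF l] show ?thesis
    proof
      assume "\<exists>\<delta>1. LR R p x' A \<delta>1 \<and> \<delta> = \<delta>1 @ q"
      then show ?thesis unfolding Tm x by (auto intro: LR_tm)
    next
      assume "\<exists>x1 x2. x' = x1 @ x2 \<and> D R p x1 \<and> LR R q x2 A \<delta>"
      then obtain x1 x2 where "x' = x1 @ x2" "D R p x1" "LR R q x2 A \<delta>" by blast
      then show ?thesis unfolding Tm x
        by (intro disjI2 exI[of _ "a # x1"] exI[of _ x2]) (auto intro: D_tm)
    qed
  next
    case (NT B)
    from Cons.prems[unfolded NT] show ?thesis
    proof (cases rule: LR.cases)
      case LR_here then show ?thesis using NT by (auto intro: LR.intros)
    next
      case (LR_down \<alpha> \<delta>')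
      then show ?thesis using NT by (auto intro: LR.intros)
    next
      case (LR_right B' \<alpha> x1 \<beta>' x2)
      have l2: "LR R (p @ q) x2 A \<delta>" using LR_right NT by simp
      from Cons.IH[OF l2] show ?thesis
      proof
        assume "\<exists>\<delta>1. LR R p x2 A \<delta>1 \<and> \<delta> = \<delta>1 @ q"
        then show ?thesis using LR_right NT by (auto intro: LR.intros)
      next
        assume "\<exists>y1 y2. x2 = y1 @ y2 \<and> D R p y1 \<and> LR R q y2 A \<delta>"
        then obtain y1 y2 where "x2 = y1 @ y2" "D R p y1" "LR R q y2 A \<delta>" by blast
        then show ?thesis using LR_right NT
          by (intro disjI2 exI[of _ "x1 @ y1"] exI[of _ y2]) (auto intro: D_nt)
      qed
    qed simp
  qed
qed

lemma LR_app1: "LR R p x A \<delta> \<Longrightarrow> LR R (p @ q) x A (\<delta> @ q)"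
proof (induction rule: LR.induct)
  case (LR_down B \<alpha> x A \<delta> \<beta>)
  then show ?case using LR.LR_down[of B \<alpha> R x A \<delta> "\<beta> @ q"] by simp
qed (auto intro: LR.intros)

lemma LR_app2: "D R p x1 \<Longrightarrow> LR R q x2 A \<delta> \<Longrightarrow> LR R (p @ q) (x1 @ x2) A \<delta>"
proof (induction rule: D.induct)
  case D_nil then show ?case by simp
next
  case (D_tm \<beta> w a) then show ?case by (auto intro: LR_tm)
next
  case (D_nt A' \<alpha> x \<beta> y)
  then show ?case using LR_right[of A' \<alpha> R x "\<beta> @ q" "y @ x2" A \<delta>] by simp
qed

lemma dstep_LR: "dstep R \<rho> \<rho>' \<Longrightarrow> LR R \<rho>' x A \<delta> \<Longrightarrow> \<exists>\<delta>'. LR R \<rho> x A \<delta>'"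
proof -
  assume "dstep R \<rho> \<rho>'" "LR R \<rho>' x A \<delta>"
  then obtain p q B \<alpha> where r: "(B,\<alpha>) \<in> R" "\<rho> = p @ [NT B] @ q" "\<rho>' = p @ (\<alpha> @ q)"
    and l: "LR R (p @ (\<alpha> @ q)) x A \<delta>" unfolding dstep_def by auto
  from LR_append[OF l] show ?thesis
  proof
    assume "\<exists>\<delta>1. LR R p x A \<delta>1 \<and> \<delta> = \<delta>1 @ \<alpha> @ q"
    then show ?thesis using r LR_app1[of R p x A _ "NT B # q"] by auto
  next
    assume "\<exists>x1 x2. x = x1 @ x2 \<and> D R p x1 \<and> LR R (\<alpha> @ q) x2 A \<delta>"
    then obtain x1 x2 where x: "x = x1 @ x2" "D R p x1" and l2: "LR R (\<alpha> @ q) x2 A \<delta>" by blast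
    from LR_append[OF l2] have "\<exists>\<delta>'. LR R (NT B # q) x2 A \<delta>'"
    proof
      assume "\<exists>\<delta>1. LR R \<alpha> x2 A \<delta>1 \<and> \<delta> = \<delta>1 @ q"
      then show ?thesis using r(1) by (auto intro: LR_down)
    next
      assume "\<exists>y1 y2. x2 = y1 @ y2 \<and> D R \<alpha> y1 \<and> LR R q y2 A \<delta>"
      then show ?thesis using r(1) by (auto intro: LR_right)
    qed
    then show ?thesis using x r LR_app2 by fastforce
  qed
qed

lemma dsteps_LR: "(dstep R)\<^sup>*\<^sup>* \<rho> \<sigma> \<Longrightarrow> LR R \<sigma> x A \<delta> \<Longrightarrow> \<exists>\<delta>'. LR R \<rho> x A \<delta>'"
proof (induction arbitrary: \<delta> rule: converse_rtranclp_induct)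
  case base then show ?case by blast
next
  case (step y z) then show ?case using dstep_LR by metis
qed

lemma D_LR: "D R \<gamma> x \<Longrightarrow> LR R (\<gamma> @ NT A # \<delta>) x A \<delta>"
  using LR_app2[of R \<gamma> x "NT A # \<delta>" "[]" A \<delta>] LR_here[of R A \<delta>] by simp


lemma prov0: "clause N \<Sigma> R s l H [] \<Longrightarrow> provable N \<Sigma> R s l H"
  by (rule provable.intros) auto
lemma prov1: "clause N \<Sigma> R s l H [b] \<Longrightarrow> provable N \<Sigma> R s l b \<Longrightarrow> provable N \<Sigma> R s l H"
  by (rule provable.intros) auto
lemma prov2: "clause N \<Sigma> R s l H [Ma r, b] \<Longrightarrow> provable N \<Sigma> R s l b \<Longrightarrow> provable N \<Sigma> R s l H"
  by (rule provable.intros) auto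
lemma prov3: "clause N \<Sigma> R s l H [Ma r, b, c] \<Longrightarrow> provable N \<Sigma> R s l b \<Longrightarrow> provable N \<Sigma> R s l c
   \<Longrightarrow> provable N \<Sigma> R s l H"
  by (rule provable.intros) auto

context
  fixes N :: "'n set" and \<Sigma> :: "'t set" and R :: "('n \<times> ('n,'t) sym list) set" and s :: 'n
    and l :: "'t list"
  assumes cfg: "cfg N \<Sigma> R s"
begin

lemma rule_wf: "(A,\<alpha>) \<in> R \<Longrightarrow> A \<in> N \<and> \<alpha> \<noteq> [] \<and> set \<alpha> \<subseteq> syms N \<Sigma>"
  using cfg unfolding cfg_def by blast

lemma D_ne: "D R \<gamma> w \<Longrightarrow> \<gamma> \<noteq> [] \<Longrightarrow> w \<noteq> []"
  by (induction rule: D.induct) (auto dest: rule_wf)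

lemma syms_Tm: "Tm a \<in> syms N \<Sigma> \<longleftrightarrow> a \<in> \<Sigma>"
  unfolding syms_def by auto
lemma syms_NT: "NT A \<in> syms N \<Sigma> \<longleftrightarrow> A \<in> N"
  unfolding syms_def by auto

lemma Snd: "D R \<gamma> x \<Longrightarrow> set \<gamma> \<subseteq> syms N \<Sigma> \<Longrightarrow> set x \<subseteq> \<Sigma> \<Longrightarrow> set v \<subseteq> \<Sigma> \<Longrightarrow>
   provable N \<Sigma> R s l (Pa \<gamma> (x @ v) v)"
proof (induction arbitrary: v rule: D.induct)
  case D_nil then show ?case by (simp add: prov0 C1)
next
  case (D_tm \<beta> w a)
  have a: "a \<in> \<Sigma>" and b: "set \<beta> \<subseteq> syms N \<Sigma>" and w: "set w \<subseteq> \<Sigma>"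
    using D_tm.prems(1,2) by auto
  show ?case
  proof (cases "w @ v = []")
    case True then show ?thesis using prov0[OF C2a[OF a b]] by simp
  next
    case False
    have p: "provable N \<Sigma> R s l (Pa \<beta> (w @ v) v)" using D_tm.IH[OF b w D_tm.prems(3)] .
    have "clause N \<Sigma> R s l (Pa (Tm a # \<beta>) (a # (w @ v)) v) [Pa \<beta> (w @ v) v]"
      using C2b[OF a b _ D_tm.prems(3) False] w D_tm.prems(3) by simp
    from prov1[OF this p] show ?thesis by simp
  qed
next
  case (D_nt A \<alpha> x \<beta> y)
  have wf: "A \<in> N" "set \<alpha> \<subseteq> syms N \<Sigma>" using rule_wf[OF D_nt(1)] by auto
  have b: "set \<beta> \<subseteq> syms N \<Sigma>" and x: "set x \<subseteq> \<Sigma>" and y: "set y \<subseteq> \<Sigma>"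
    using D_nt.prems(1,2) by auto
  have yv: "set (y @ v) \<subseteq> \<Sigma>" using y D_nt.prems(3) by simp
  have p1: "provable N \<Sigma> R s l (Pa \<alpha> (x @ (y @ v)) (y @ v))"
    using D_nt.IH(1)[OF wf(2) x yv] .
  have p2: "provable N \<Sigma> R s l (Pa \<beta> (y @ v) v)" using D_nt.IH(2)[OF b y D_nt.prems(3)] .
  have xyv: "set (x @ y @ v) \<subseteq> \<Sigma>" using x yv by simp
  show ?case
  proof (cases "y @ v = []")
    case True
    have "clause N \<Sigma> R s l (Pa (NT A # \<beta>) (x @ y @ v) []) [Ma (A,\<alpha>), Pa \<alpha> (x @ y @ v) []]"
      using C3a[OF wf(1) D_nt(1) b xyv] .
    from prov2[OF this] p1 True show ?thesis by simp
  next
    case False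
    have "clause N \<Sigma> R s l (Pa (NT A # \<beta>) (x @ y @ v) v) [Ma (A,\<alpha>), Pa \<alpha> (x @ y @ v) (y @ v), Pa \<beta> (y @ v) v]"
      using C3b[OF wf(1) D_nt(1) b xyv yv D_nt.prems(3) False] .
    from prov3[OF this p1 p2] show ?thesis by simp
  qed
qed

lemma Pref: "D R \<gamma> x \<Longrightarrow> x = u @ r \<Longrightarrow> u \<noteq> [] \<Longrightarrow> set \<gamma> \<subseteq> syms N \<Sigma> \<Longrightarrow> set u \<subseteq> \<Sigma> \<Longrightarrow>
   provable N \<Sigma> R s l (Pa \<gamma> u [])"
proof (induction arbitrary: u r rule: D.induct)
  case D_nil then show ?case by simp
next
  case (D_tm \<beta> w a)
  then obtain u' where u: "u = a # u'" "w = u' @ r" by (cases u) auto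
  have a: "a \<in> \<Sigma>" and b: "set \<beta> \<subseteq> syms N \<Sigma>" and u'': "set u' \<subseteq> \<Sigma>"
    using D_tm.prems(3,4) u by auto
  show ?case
  proof (cases "u' = []")
    case True then show ?thesis using prov0[OF C2a[OF a b]] u by simp
  next
    case False
    have p: "provable N \<Sigma> R s l (Pa \<beta> u' [])" by (rule D_tm.IH[OF u(2) False b u''])
    have "clause N \<Sigma> R s l (Pa (Tm a # \<beta>) (a # u') []) [Pa \<beta> u' []]"
      using C2b[OF a b u'' _ False] by simp
    from prov1[OF this p] u show ?thesis by simp
  qed
next
  case (D_nt A \<alpha> x \<beta> y)
  have wf: "A \<in> N" "set \<alpha> \<subseteq> syms N \<Sigma>" using rule_wf[OF D_nt(1)] by auto
  have b: "set \<beta> \<subseteq> syms N \<Sigma>" using D_nt.prems(3) by simp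
  from D_nt.prems(1) obtain us where "(x = u @ us \<and> us @ y = r) \<or> (x @ us = u \<and> y = us @ r)"
    by (auto simp: append_eq_append_conv2)
  then show ?case
  proof
    assume h: "x = u @ us \<and> us @ y = r"
    then have "provable N \<Sigma> R s l (Pa \<alpha> u [])" using D_nt.IH(1)[OF _ D_nt.prems(2) wf(2) D_nt.prems(4)] by blast
    then show ?thesis by (rule prov2[OF C3a[OF wf(1) D_nt(1) b D_nt.prems(4)]])
  next
    assume h: "x @ us = u \<and> y = us @ r"
    show ?thesis
    proof (cases "us = []")
      case True
      then have "provable N \<Sigma> R s l (Pa \<alpha> u [])" using D_nt.IH(1)[of u "[]", OF _ D_nt.prems(2) wf(2) D_nt.prems(4)] h by simp
      then show ?thesis by (rule prov2[OF C3a[OF wf(1) D_nt(1) b D_nt.prems(4)]])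
    next
      case False
      have xs: "set x \<subseteq> \<Sigma>" "set us \<subseteq> \<Sigma>" using h D_nt.prems(4) by auto
      have p1: "provable N \<Sigma> R s l (Pa \<alpha> (x @ us) us)" using Snd[OF D_nt(2) wf(2) xs] .
      have p2: "provable N \<Sigma> R s l (Pa \<beta> us [])" using D_nt.IH(2)[OF _ False b xs(2)] h by blast
      have "clause N \<Sigma> R s l (Pa (NT A # \<beta>) (x @ us) []) [Ma (A,\<alpha>), Pa \<alpha> (x @ us) us, Pa \<beta> us []]"
        using C3b[OF wf(1) D_nt(1) b _ xs(2) _ False] xs by simp
      from prov3[OF this p1 p2] h show ?thesis by simp
    qed
  qed
qed

lemma usable3: "clause N \<Sigma> R s l H [Ma r, b, c] \<Longrightarrow> provable N \<Sigma> R s l b \<Longrightarrow> provable N \<Sigma> R s l c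
   \<Longrightarrow> usable_clause N \<Sigma> R s l H [Ma r, b, c]"
  unfolding usable_clause_def by auto
lemma usable2: "clause N \<Sigma> R s l H [Ma r, b] \<Longrightarrow> provable N \<Sigma> R s l b
   \<Longrightarrow> usable_clause N \<Sigma> R s l H [Ma r, b]"
  unfolding usable_clause_def by auto
lemma usable1: "clause N \<Sigma> R s l H [b] \<Longrightarrow> provable N \<Sigma> R s l b
   \<Longrightarrow> usable_clause N \<Sigma> R s l H [b]"
  unfolding usable_clause_def by auto

lemma LR_main: "LR R \<gamma> x A \<delta> \<Longrightarrow> set \<gamma> \<subseteq> syms N \<Sigma> \<Longrightarrow> set x \<subseteq> \<Sigma> \<Longrightarrow> set u \<subseteq> \<Sigma> \<Longrightarrow> u \<noteq> [] \<Longrightarrow>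
  (\<forall>\<beta>. set \<beta> \<subseteq> syms N \<Sigma> \<longrightarrow> provable N \<Sigma> R s l (Pa (NT A # \<beta>) u [])) \<Longrightarrow>
  provable N \<Sigma> R s l (Pa \<gamma> (x @ u) []) \<and>
  (defined_goal N \<Sigma> R s l (Pa \<gamma> (x @ u) []) \<longrightarrow> (\<exists>\<delta>'. set \<delta>' \<subseteq> syms N \<Sigma> \<and> defined_goal N \<Sigma> R s l (Pa (NT A # \<delta>') u [])))"
proof (induction rule: LR.induct)
  case (LR_here A \<delta>)
  then show ?case by auto
next
  case (LR_tm \<beta> x A \<delta> a)
  have pre: "set \<beta> \<subseteq> syms N \<Sigma>" "set x \<subseteq> \<Sigma>" using LR_tm.prems(1,2) by auto
  note IH = conjunct1[OF LR_tm.IH[OF pre LR_tm.prems(3,4,5)]] conjunct2[OF LR_tm.IH[OF pre LR_tm.prems(3,4,5)]]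
  have cl: "clause N \<Sigma> R s l (Pa (Tm a # \<beta>) (a # x @ u) []) [Pa \<beta> (x @ u) []]"
    using LR_tm by (intro C2b) (auto simp: syms_def)
  have "provable N \<Sigma> R s l (Pa (Tm a # \<beta>) (a # x @ u) [])" using prov1[OF cl IH(1)] .
  moreover have "defined_goal N \<Sigma> R s l (Pa (Tm a # \<beta>) (a # x @ u) []) \<Longrightarrow> defined_goal N \<Sigma> R s l (Pa \<beta> (x @ u) [])"
    by (rule defined_goal.step[OF _ usable1[OF cl IH(1)]]) auto
  ultimately show ?case using IH(2) by simp
next
  case (LR_down B \<alpha> x A \<delta> \<beta>)
  have wf: "B \<in> N" "set \<alpha> \<subseteq> syms N \<Sigma>" using rule_wf[OF LR_down(1)] by auto
  note IH = conjunct1[OF LR_down.IH[OF wf(2) LR_down.prems(2-5)]] conjunct2[OF LR_down.IH[OF wf(2) LR_down.prems(2-5)]]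
  have cl: "clause N \<Sigma> R s l (Pa (NT B # \<beta>) (x @ u) []) [Ma (B,\<alpha>), Pa \<alpha> (x @ u) []]"
    using LR_down wf by (intro C3a) auto
  have "provable N \<Sigma> R s l (Pa (NT B # \<beta>) (x @ u) [])" using prov2[OF cl IH(1)] .
  moreover have "defined_goal N \<Sigma> R s l (Pa (NT B # \<beta>) (x @ u) []) \<Longrightarrow> defined_goal N \<Sigma> R s l (Pa \<alpha> (x @ u) [])"
    by (rule defined_goal.step[OF _ usable2[OF cl IH(1)]]) auto
  ultimately show ?case using IH(2) by simp
next
  case (LR_right B \<alpha> x1 \<beta> x2 A \<delta>)
  have wf: "B \<in> N" "set \<alpha> \<subseteq> syms N \<Sigma>" using rule_wf[OF LR_right(1)] by auto
  have pre: "set \<beta> \<subseteq> syms N \<Sigma>" "set x2 \<subseteq> \<Sigma>" "set x1 \<subseteq> \<Sigma>" using LR_right.prems(1,2) by auto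
  note IH = conjunct1[OF LR_right.IH[OF pre(1,2) LR_right.prems(3,4,5)]] conjunct2[OF LR_right.IH[OF pre(1,2) LR_right.prems(3,4,5)]]
  have p1: "provable N \<Sigma> R s l (Pa \<alpha> (x1 @ (x2 @ u)) (x2 @ u))"
    using Snd[OF LR_right(2) wf(2) pre(3), of "x2 @ u"] pre LR_right.prems(3) by simp
  have cl: "clause N \<Sigma> R s l (Pa (NT B # \<beta>) (x1 @ x2 @ u) []) [Ma (B,\<alpha>), Pa \<alpha> (x1 @ x2 @ u) (x2 @ u), Pa \<beta> (x2 @ u) []]"
    using LR_right(1) LR_right.prems(1,3,4) wf pre by (intro C3b) auto
  have "provable N \<Sigma> R s l (Pa (NT B # \<beta>) (x1 @ x2 @ u) [])" using prov3[OF cl] p1 IH(1) by simp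
  moreover have "defined_goal N \<Sigma> R s l (Pa (NT B # \<beta>) (x1 @ x2 @ u) []) \<Longrightarrow> defined_goal N \<Sigma> R s l (Pa \<beta> (x2 @ u) [])"
    by (rule defined_goal.step[OF _ usable3[OF cl]]) (use p1 IH in auto)
  ultimately show ?case using IH(2) by simp
qed

definition PP where "PP u C \<longleftrightarrow> (\<forall>\<beta>. set \<beta> \<subseteq> syms N \<Sigma> \<longrightarrow> provable N \<Sigma> R s l (Pa (NT C # \<beta>) u []))"

lemma PP_step: "lc_direct R B C \<Longrightarrow> PP u C \<Longrightarrow> set u \<subseteq> \<Sigma> \<Longrightarrow> PP u B"
  unfolding PP_def lc_direct_def
proof (intro allI impI)
  fix \<beta> assume "\<exists>\<beta>. (B, NT C # \<beta>) \<in> R" and P: "\<forall>\<beta>. set \<beta> \<subseteq> syms N \<Sigma> \<longrightarrow> provable N \<Sigma> R s l (Pa (NT C # \<beta>) u [])"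
    and u: "set u \<subseteq> \<Sigma>" and b: "set \<beta> \<subseteq> syms N \<Sigma>"
  then obtain \<beta>0 where r: "(B, NT C # \<beta>0) \<in> R" by blast
  from rule_wf[OF r] have w: "B \<in> N" "set \<beta>0 \<subseteq> syms N \<Sigma>" by auto
  have "provable N \<Sigma> R s l (Pa (NT C # \<beta>0) u [])" using P w(2) by blast
  then show "provable N \<Sigma> R s l (Pa (NT B # \<beta>) u [])"
    by (rule prov2[OF C3a[OF w(1) r b u]])
qed

lemma PP_steps: "(lc_direct R)\<^sup>*\<^sup>* B C \<Longrightarrow> PP u C \<Longrightarrow> set u \<subseteq> \<Sigma> \<Longrightarrow> PP u B"
  by (induction rule: converse_rtranclp_induct) (auto intro: PP_step)

lemma step1: "(B, NT B' # \<beta>0) \<in> R \<Longrightarrow> defined_goal N \<Sigma> R s l (Pa (NT B # \<beta>) u []) \<Longrightarrow>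
  set \<beta> \<subseteq> syms N \<Sigma> \<Longrightarrow> set u \<subseteq> \<Sigma> \<Longrightarrow> PP u B' \<Longrightarrow>
  expl_parent N \<Sigma> R s l (Pa (NT B # \<beta>) u []) (Pa (NT B' # \<beta>0) u [])"
proof -
  assume r: "(B, NT B' # \<beta>0) \<in> R" and d: "defined_goal N \<Sigma> R s l (Pa (NT B # \<beta>) u [])"
    and b: "set \<beta> \<subseteq> syms N \<Sigma>" and u: "set u \<subseteq> \<Sigma>" and P: "PP u B'"
  from rule_wf[OF r] have wf: "B \<in> N" "set \<beta>0 \<subseteq> syms N \<Sigma>" by auto
  have cl: "clause N \<Sigma> R s l (Pa (NT B # \<beta>) u []) [Ma (B, NT B' # \<beta>0), Pa (NT B' # \<beta>0) u []]"
    using r wf b u by (intro C3a) auto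
  have pr: "provable N \<Sigma> R s l (Pa (NT B' # \<beta>0) u [])" using P wf unfolding PP_def by auto
  have us: "usable_clause N \<Sigma> R s l (Pa (NT B # \<beta>) u []) [Ma (B, NT B' # \<beta>0), Pa (NT B' # \<beta>0) u []]"
    using usable2[OF cl pr] .
  have "defined_goal N \<Sigma> R s l (Pa (NT B' # \<beta>0) u [])"
    by (rule defined_goal.step[OF d us]) auto
  then show ?thesis unfolding expl_parent_def using d us by auto
qed

lemma path: "(lc_direct R)\<^sup>*\<^sup>* B C \<Longrightarrow> PP u C \<Longrightarrow> set u \<subseteq> \<Sigma> \<Longrightarrow>
  \<forall>\<beta>. defined_goal N \<Sigma> R s l (Pa (NT B # \<beta>) u []) \<longrightarrow> set \<beta> \<subseteq> syms N \<Sigma> \<longrightarrow>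
   (\<exists>\<beta>'. set \<beta>' \<subseteq> syms N \<Sigma> \<and> defined_goal N \<Sigma> R s l (Pa (NT C # \<beta>') u []) \<and>
     (expl_parent N \<Sigma> R s l)\<^sup>*\<^sup>* (Pa (NT B # \<beta>) u []) (Pa (NT C # \<beta>') u []))"
proof (induction rule: converse_rtranclp_induct)
  case base then show ?case by blast
next
  case (step B B1)
  show ?case
  proof (intro allI impI)
    fix \<beta> assume d: "defined_goal N \<Sigma> R s l (Pa (NT B # \<beta>) u [])" and b: "set \<beta> \<subseteq> syms N \<Sigma>"
    obtain \<beta>0 where r: "(B, NT B1 # \<beta>0) \<in> R" using step(1) unfolding lc_direct_def by blast
    have P1: "PP u B1" using PP_steps[OF step(2) step(4,5)] .
    have e: "expl_parent N \<Sigma> R s l (Pa (NT B # \<beta>) u []) (Pa (NT B1 # \<beta>0) u [])"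
      using step1[OF r d b step(5) P1] .
    then have d1: "defined_goal N \<Sigma> R s l (Pa (NT B1 # \<beta>0) u [])" unfolding expl_parent_def by auto
    have "set \<beta>0 \<subseteq> syms N \<Sigma>" using rule_wf[OF r] by auto
    then obtain \<beta>' where "set \<beta>' \<subseteq> syms N \<Sigma>" "defined_goal N \<Sigma> R s l (Pa (NT C # \<beta>') u [])"
      "(expl_parent N \<Sigma> R s l)\<^sup>*\<^sup>* (Pa (NT B1 # \<beta>0) u []) (Pa (NT C # \<beta>') u [])"
      using step(3)[OF step(4,5)] d1 by blast
    then show "\<exists>\<beta>'. set \<beta>' \<subseteq> syms N \<Sigma> \<and> defined_goal N \<Sigma> R s l (Pa (NT C # \<beta>') u []) \<and>
     (expl_parent N \<Sigma> R s l)\<^sup>*\<^sup>* (Pa (NT B # \<beta>) u []) (Pa (NT C # \<beta>') u [])"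
      using e by (meson converse_rtranclp_into_rtranclp)
  qed
qed

lemma prov_len: "provable N \<Sigma> R s l H \<Longrightarrow> H = Pa \<gamma> u v \<Longrightarrow>
   length v \<le> length u \<and> (\<gamma> \<noteq> [] \<longrightarrow> length v < length u)"
proof (induction arbitrary: \<gamma> u v rule: provable.induct)
  case (1 H B)
  from 1(1) show ?case
  proof (cases rule: clause.cases)
    case (C3a A \<alpha> \<beta> u')
    then have "\<alpha> \<noteq> []" using rule_wf by blast
    then show ?thesis using 1 C3a by fastforce
  next
    case (C3b A \<alpha> \<beta> u' v' w')
    then have "\<alpha> \<noteq> []" using rule_wf by blast
    then show ?thesis using 1 C3b by fastforce
  qed (use 1 in auto)
qed

lemma parent_len: "expl_parent N \<Sigma> R s l (Pa \<gamma> u w) (Pa \<gamma>' u' w') \<Longrightarrow>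
   length u' \<le> length u \<and> (length u' = length u \<longrightarrow> (\<exists>B \<beta>. \<gamma> = NT B # \<beta> \<and> (B, \<gamma>') \<in> R))"
proof -
  assume "expl_parent N \<Sigma> R s l (Pa \<gamma> u w) (Pa \<gamma>' u' w')"
  then obtain Bd where c: "clause N \<Sigma> R s l (Pa \<gamma> u w) Bd" and
    pv: "\<forall>b\<in>set Bd. is_Pa b \<longrightarrow> provable N \<Sigma> R s l b" and m: "Pa \<gamma>' u' w' \<in> set Bd"
    unfolding expl_parent_def usable_clause_def by blast
  from c show ?thesis
  proof (cases rule: clause.cases)
    case C3b
    then obtain A \<alpha> \<beta> v0 where h: "\<gamma> = NT A # \<beta>" "Bd = [Ma (A,\<alpha>), Pa \<alpha> u v0, Pa \<beta> v0 w]" "(A,\<alpha>) \<in> R"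
      by blast
    have "\<alpha> \<noteq> []" using h rule_wf by blast
    moreover have "provable N \<Sigma> R s l (Pa \<alpha> u v0)" using pv h by auto
    ultimately have "length v0 < length u" using prov_len by blast
    then show ?thesis using h m by auto
  qed (use m in auto)
qed

lemma child_Pa: "expl_parent N \<Sigma> R s l H C \<Longrightarrow> \<exists>\<gamma> u w. C = Pa \<gamma> u w"
proof -
  assume "expl_parent N \<Sigma> R s l H C"
  then obtain Bd where c: "clause N \<Sigma> R s l H Bd" and m: "C \<in> set Bd" and d: "defined_goal N \<Sigma> R s l C"
    unfolding expl_parent_def usable_clause_def by blast
  have "\<not> is_Ma C" using d by (induction rule: defined_goal.induct) (auto elim: is_Pa.elims)
  with c m show ?thesis by (cases rule: clause.cases) auto
qed

lemma parent_cycle: "(expl_parent N \<Sigma> R s l)\<^sup>+\<^sup>+ X Y \<Longrightarrow> (\<exists>\<gamma>' u' w'. Y = Pa \<gamma>' u' w') \<and>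
  (\<forall>\<gamma> u w \<gamma>' u' w'. X = Pa \<gamma> u w \<longrightarrow> Y = Pa \<gamma>' u' w' \<longrightarrow> length u' \<le> length u \<and>
     (length u' = length u \<longrightarrow> (\<exists>B \<beta>. \<gamma> = NT B # \<beta> \<and> (\<forall>B' \<beta>'. \<gamma>' = NT B' # \<beta>' \<longrightarrow> (lc_direct R)\<^sup>+\<^sup>+ B B'))))"
proof (induction rule: tranclp_induct)
  case (base Y)
  show ?case
  proof (intro conjI allI impI)
    show "\<exists>\<gamma>' u' w'. Y = Pa \<gamma>' u' w'" using child_Pa[OF base] .
  next
    fix \<gamma> u w \<gamma>' u' w' assume X: "X = Pa \<gamma> u w" and Z: "Y = Pa \<gamma>' u' w'"
    have i2: "length u' \<le> length u \<and> (length u' = length u \<longrightarrow> (\<exists>B \<beta>. \<gamma> = NT B # \<beta> \<and> (B, \<gamma>') \<in> R))"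
      using parent_len base X Z by blast
    then show "length u' \<le> length u" by blast
    assume "length u' = length u"
    then obtain B \<beta> where "\<gamma> = NT B # \<beta>" "(B, \<gamma>') \<in> R" using i2 by blast
    then show "\<exists>B \<beta>. \<gamma> = NT B # \<beta> \<and> (\<forall>B' \<beta>'. \<gamma>' = NT B' # \<beta>' \<longrightarrow> (lc_direct R)\<^sup>+\<^sup>+ B B')"
      unfolding lc_direct_def by auto
  qed
next
  case (step Y Z)
  from step(3) obtain \<gamma>1 u1 w1 where Y: "Y = Pa \<gamma>1 u1 w1" by blast
  show ?case
  proof (intro conjI allI impI)
    show "\<exists>\<gamma>' u' w'. Z = Pa \<gamma>' u' w'" using child_Pa[OF step(2)] .
  next
    fix \<gamma> u w \<gamma>' u' w' assume X: "X = Pa \<gamma> u w" and Z: "Z = Pa \<gamma>' u' w'"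
    have i1: "length u1 \<le> length u \<and> (length u1 = length u \<longrightarrow> (\<exists>B \<beta>. \<gamma> = NT B # \<beta> \<and> (\<forall>B' \<beta>'. \<gamma>1 = NT B' # \<beta>' \<longrightarrow> (lc_direct R)\<^sup>+\<^sup>+ B B')))"
      using step(3) X Y by blast
    have i2: "length u' \<le> length u1 \<and> (length u' = length u1 \<longrightarrow> (\<exists>B \<beta>. \<gamma>1 = NT B # \<beta> \<and> (B, \<gamma>') \<in> R))"
      using parent_len step(2) Y Z by blast
    show "length u' \<le> length u" using i1 i2 by linarith
    assume eq: "length u' = length u"
    then have "length u1 = length u" "length u' = length u1" using i1 i2 by linarith+
    then obtain B \<beta> C \<beta>1 where g: "\<gamma> = NT B # \<beta>" and t: "\<forall>B' \<beta>'. \<gamma>1 = NT B' # \<beta>' \<longrightarrow> (lc_direct R)\<^sup>+\<^sup>+ B B'"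
      and g1: "\<gamma>1 = NT C # \<beta>1" and r: "(C, \<gamma>') \<in> R" using i1 i2 by blast
    have "(lc_direct R)\<^sup>+\<^sup>+ B C" using t g1 by blast
    then show "\<exists>B \<beta>. \<gamma> = NT B # \<beta> \<and> (\<forall>B' \<beta>'. \<gamma>' = NT B' # \<beta>' \<longrightarrow> (lc_direct R)\<^sup>+\<^sup>+ B B')"
    proof (intro exI conjI allI impI)
      show "\<gamma> = NT B # \<beta>" by (rule g)
      fix B' \<beta>' assume "\<gamma>' = NT B' # \<beta>'"
      then have "lc_direct R C B'" using r unfolding lc_direct_def by blast
      then show "(lc_direct R)\<^sup>+\<^sup>+ B B'" using \<open>(lc_direct R)\<^sup>+\<^sup>+ B C\<close> by (rule tranclp.trancl_into_trancl[rotated])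
    qed
  qed
qed


end

theorem theorem2:
  fixes N :: "'n set" and \<Sigma> :: "'t set" and R :: "('n \<times> ('n,'t) sym list) set" and s :: 'n
  assumes "cfg N \<Sigma> R s"
    and "\<forall>A \<in> N. \<not> useless_nt \<Sigma> R s A"
  shows "(\<exists>l. is_prefix \<Sigma> R s l \<and> expl_cyclic N \<Sigma> R s l) \<longleftrightarrow> lc_cyclic R"
proof
  assume "\<exists>l. is_prefix \<Sigma> R s l \<and> expl_cyclic N \<Sigma> R s l"
  then obtain l C where cyc: "(expl_parent N \<Sigma> R s l)\<^sup>+\<^sup>+ C C" unfolding expl_cyclic_def by blast
  note pc = parent_cycle[OF assms(1) cyc]
  from conjunct1[OF pc] obtain \<gamma> u w where Cd: "C = Pa \<gamma> u w" by (elim exE)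
  have "length u \<le> length u \<and> (length u = length u \<longrightarrow> (\<exists>B \<beta>. \<gamma> = NT B # \<beta> \<and>
                 (\<forall>B' \<beta>'. \<gamma> = NT B' # \<beta>' \<longrightarrow> (lc_direct R)\<^sup>+\<^sup>+ B B')))"
    using conjunct2[OF pc, rule_format, OF Cd Cd] .
  then obtain B \<beta> where "\<gamma> = NT B # \<beta>" "\<forall>B' \<beta>'. \<gamma> = NT B' # \<beta>' \<longrightarrow> (lc_direct R)\<^sup>+\<^sup>+ B B'"
    by auto
  then show "lc_cyclic R" unfolding lc_cyclic_def by blast
next
  assume "lc_cyclic R"
  then obtain A where "(lc_direct R)\<^sup>+\<^sup>+ A A" unfolding lc_cyclic_def by blast
  then obtain A1 where d1: "lc_direct R A A1" and lA1: "(lc_direct R)\<^sup>*\<^sup>* A1 A"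
    using tranclpD by metis
  then obtain \<beta>0 where r0: "(A, NT A1 # \<beta>0) \<in> R" unfolding lc_direct_def by blast
  have AN: "A \<in> N" using rule_wf[OF assms(1) r0] by blast
  have sN: "s \<in> N" using assms(1) unfolding cfg_def by blast
  from assms(2) AN obtain \<alpha> where ra: "(A,\<alpha>) \<in> R" and nu: "\<not> useless_rule \<Sigma> R s (A,\<alpha>)"
    unfolding useless_nt_def by blast
  from nu obtain \<gamma> \<delta> w where wS: "set w \<subseteq> \<Sigma>" and d_s: "(dstep R)\<^sup>*\<^sup>* [NT s] (\<gamma> @ [NT A] @ \<delta>)"
    and d_w: "(dstep R)\<^sup>*\<^sup>* (\<gamma> @ \<alpha> @ \<delta>) (map Tm w)"
    unfolding useless_rule_def by auto
  have wfa: "\<alpha> \<noteq> []" "set \<alpha> \<subseteq> syms N \<Sigma>" using rule_wf[OF assms(1) ra] by auto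
  have "D R (\<gamma> @ \<alpha> @ \<delta>) w" using dsteps_D[OF d_w D_map] .
  then obtain w1 w23 where w: "w = w1 @ w23" "D R \<gamma> w1" "D R (\<alpha> @ \<delta>) w23" by (auto simp: D_append)
  then obtain w2 w3 where w': "w23 = w2 @ w3" "D R \<alpha> w2" "D R \<delta> w3" by (auto simp: D_append)
  have "w2 \<noteq> []" using D_ne[OF assms(1) w'(2) wfa(1)] .
  then obtain a w2' where aw: "w2 = a # w2'" by (cases w2) auto
  define u where "u = [a]"
  define l where "l = w1 @ [a]"
  have uS: "set u \<subseteq> \<Sigma>" using wS w w' aw unfolding u_def by auto
  have w1S: "set w1 \<subseteq> \<Sigma>" using wS w by auto
  have PPA: "PP N \<Sigma> R s l u A"
    unfolding PP_def[OF assms(1)]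
  proof (intro allI impI)
    fix \<beta> assume b: "set \<beta> \<subseteq> syms N \<Sigma>"
    have "provable N \<Sigma> R s l (Pa \<alpha> u [])"
      using Pref[OF assms(1) w'(2), of u w2'] aw wfa uS unfolding u_def by simp
    then show "provable N \<Sigma> R s l (Pa (NT A # \<beta>) u [])"
      by (rule prov2[OF C3a[OF AN ra b uS]])
  qed
  have PPA1: "PP N \<Sigma> R s l u A1" using PP_steps[OF assms(1) lA1 PPA uS] .
  have "LR R (\<gamma> @ NT A # \<delta>) w1 A \<delta>" using D_LR[OF w(2)] .
  from dsteps_LR[OF d_s[simplified] this] obtain \<delta>0 where LR0: "LR R [NT s] w1 A \<delta>0" by (elim exE)
  have sy: "set [NT s] \<subseteq> syms N \<Sigma>" using sN by (simp add: syms_def)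
  have PPA': "\<forall>\<beta>. set \<beta> \<subseteq> syms N \<Sigma> \<longrightarrow> provable N \<Sigma> R s l (Pa (NT A # \<beta>) u [])"
    using PPA unfolding PP_def[OF assms(1)] .
  note M = LR_main[OF assms(1) LR0 sy w1S uS _ PPA', unfolded u_def, folded l_def, simplified]
  have dS: "defined_goal N \<Sigma> R s l (Pa [NT s] l [])"
    by (rule defined_goal.step[OF defined_goal.root usable1[OF assms(1) C0 conjunct1[OF M]]]) auto
  from conjunct2[OF M] dS obtain \<delta>' where db: "set \<delta>' \<subseteq> syms N \<Sigma>"
    and dA: "defined_goal N \<Sigma> R s l (Pa (NT A # \<delta>') u [])" unfolding u_def by blast
  define X where "X = Pa (NT A1 # \<beta>0) u []"
  have e1: "expl_parent N \<Sigma> R s l (Pa (NT A # \<delta>') u []) X"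
    unfolding X_def using step1[OF assms(1) r0 dA db uS PPA1] .
  then have dX: "defined_goal N \<Sigma> R s l X" unfolding expl_parent_def by blast
  have b0: "set \<beta>0 \<subseteq> syms N \<Sigma>" using rule_wf[OF assms(1) r0] by simp
  obtain \<beta>' where b': "set \<beta>' \<subseteq> syms N \<Sigma>" and dA': "defined_goal N \<Sigma> R s l (Pa (NT A # \<beta>') u [])"
    and pth: "(expl_parent N \<Sigma> R s l)\<^sup>*\<^sup>* X (Pa (NT A # \<beta>') u [])"
    using path[OF assms(1) lA1 PPA uS] dX b0 unfolding X_def by blast
  have e2: "expl_parent N \<Sigma> R s l (Pa (NT A # \<beta>') u []) X"
    unfolding X_def using step1[OF assms(1) r0 dA' b' uS PPA1] .
  have cyc: "expl_cyclic N \<Sigma> R s l"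
    unfolding expl_cyclic_def using rtranclp_into_tranclp1[OF pth e2] by blast
  have st: "dstep R (\<gamma> @ [NT A] @ \<delta>) (\<gamma> @ \<alpha> @ \<delta>)" unfolding dstep_def using ra by blast
  have "(dstep R)\<^sup>*\<^sup>* [NT s] (map Tm w)"
    using d_s st d_w by (meson rtranclp.rtrancl_into_rtrancl rtranclp_trans)
  moreover have "w = l @ (w2' @ w3)" using w w' aw unfolding l_def by simp
  ultimately have "is_prefix \<Sigma> R s l" unfolding is_prefix_def l_def using wS by blast
  with cyc show "\<exists>l. is_prefix \<Sigma> R s l \<and> expl_cyclic N \<Sigma> R s l" by blast
qed

end
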